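(* Let $\mu$ be an $E_2$-invariant Borel probability measure on $\mathbb{T}$ and let $F$ be a $p$-flower for $E_2$ (with $p\ge 3$) such that $\mathrm{supp}(\mu)\subset F$. If $\mu(P_i)=0$ for some petal $P_i$ of $F$, then there is a $(p-2)$-flower $\tilde F$ for $E_2$ with $\mathrm{supp}(\mu)\subset\tilde F$ and $P_i\not\subset\tilde F$.
   Context: $\mathbb{T}=\mathbb{R}/\mathbb{Z}$, $E_2(x)=2x\bmod1$. A preimage selector for $E_2$ is a map $\eta:\mathbb{T}\to\mathbb{T}$ with $E_2(\eta(x))=x$ for all $x$, having finitely many discontinuities, each a jump discontinuity (both one-sided limits exist, differ, and one equals the value). A $p$-flower is $\overline{\eta(\mathbb{T})}$ for a preimage selector $\eta$ with exactly $p$ discontinuities; its $p$ connected components (closed intervals) are its petals. *)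

theory Defs
  imports "HOL-Probability.Probability"
begin

text \<open>The circle T = R/Z is modelled as the unit circle in the complex plane,
  parametrised by t \<mapsto> exp(2 pi i t); the doubling map E_2 becomes z \<mapsto> z^2.\<close>

definition circ :: "complex set" where
  "circ = sphere 0 1"

definition cis2pi :: "real \<Rightarrow> complex" where
  "cis2pi t = exp (2 * of_real pi * \<i> * of_real t)"

definition E2 :: "complex \<Rightarrow> complex" where
  "E2 z = z ^ 2"

definition discont :: "(complex \<Rightarrow> complex) \<Rightarrow> complex set" where
  "discont \<eta> = {z \<in> circ. \<not> continuous (at z within circ) \<eta>}"

definition jump_at :: "(complex \<Rightarrow> complex) \<Rightarrow> complex \<Rightarrow> bool" where
  "jump_at \<eta> z \<longleftrightarrow> (\<exists>t a b. cis2pi t = z \<and> a \<noteq> b \<and>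
      ((\<lambda>s. \<eta> (cis2pi s)) \<longlongrightarrow> a) (at_left t) \<and>
      ((\<lambda>s. \<eta> (cis2pi s)) \<longlongrightarrow> b) (at_right t) \<and>
      (\<eta> z = a \<or> \<eta> z = b))"

definition preimage_selector :: "(complex \<Rightarrow> complex) \<Rightarrow> bool" where
  "preimage_selector \<eta> \<longleftrightarrow>
     (\<forall>z\<in>circ. \<eta> z \<in> circ \<and> E2 (\<eta> z) = z) \<and>
     finite (discont \<eta>) \<and> (\<forall>z\<in>discont \<eta>. jump_at \<eta> z)"

definition flower :: "nat \<Rightarrow> complex set \<Rightarrow> bool" where
  "flower p F \<longleftrightarrow> (\<exists>\<eta>. preimage_selector \<eta> \<and> card (discont \<eta>) = p \<and>
                         F = closure (\<eta> ` circ))"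

definition petals :: "complex set \<Rightarrow> complex set set" where
  "petals F = components F"

definition supp :: "complex measure \<Rightarrow> complex set" where
  "supp \<mu> = {x. \<forall>U. open U \<and> x \<in> U \<longrightarrow> emeasure \<mu> U > 0}"

text \<open>Borel probability measure on T, i.e. a Borel probability measure on C
  concentrated on the unit circle, invariant under E_2.\<close>
definition E2_invariant_prob :: "complex measure \<Rightarrow> bool" where
  "E2_invariant_prob \<mu> \<longleftrightarrow> prob_space \<mu> \<and> sets \<mu> = sets borel \<and>
     emeasure \<mu> circ = 1 \<and> distr \<mu> borel E2 = \<mu>"

end

theory Submission
  imports Defs
begin

lemma cis2pi_norm [simp]: "norm (cis2pi t) = 1"
  unfolding cis2pi_def by simp

lemma cis2pi_circ [simp]: "cis2pi t \<in> circ"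
  unfolding circ_def by simp

lemma cis2pi_nz [simp]: "cis2pi t \<noteq> 0"
  unfolding cis2pi_def by simp

lemma cis2pi_add: "cis2pi (s + t) = cis2pi s * cis2pi t"
  unfolding cis2pi_def by (simp add: distrib_left exp_add)

lemma cis2pi_eq_iff: "cis2pi s = cis2pi t \<longleftrightarrow> (\<exists>k::int. s = t + of_int k)"
proof -
  have "cis2pi s = cis2pi t \<longleftrightarrow> (\<exists>n::int. 2 * of_real pi * \<i> * of_real s = 2 * of_real pi * \<i> * of_real t + (of_int (2 * n) * pi) * \<i>)"
    unfolding cis2pi_def exp_eq by simp
  also have "\<dots> \<longleftrightarrow> (\<exists>k::int. s = t + of_int k)"
  proof (intro ex_cong1)
    fix n :: int
    have "(2 * of_real pi * \<i> * of_real s = 2 * of_real pi * \<i> * of_real t + (of_int (2 * n) * pi) * \<i>)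
       \<longleftrightarrow> (2 * of_real pi * \<i>) * (of_real s :: complex) = (2 * of_real pi * \<i>) * of_real (t + of_int n)"
      by (simp add: algebra_simps)
    also have "\<dots> \<longleftrightarrow> (of_real s :: complex) = of_real (t + of_int n)"
      by (subst mult_cancel_left) simp
    also have "\<dots> \<longleftrightarrow> s = t + of_int n" by (simp only: of_real_eq_iff)
    finally show "(2 * of_real pi * \<i> * of_real s = 2 * of_real pi * \<i> * of_real t + (of_int (2 * n) * pi) * \<i>) \<longleftrightarrow> s = t + of_int n" .
  qed
  finally show ?thesis .
qed

lemma cis2pi_int [simp]: "cis2pi (t + of_int k) = cis2pi t"
  using cis2pi_eq_iff by blast

lemma isCont_cis2pi [continuous_intros]: "isCont cis2pi t"
  unfolding cis2pi_def by (intro continuous_intros)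

lemma continuous_on_cis2pi: "continuous_on S cis2pi"
  by (simp add: continuous_at_imp_continuous_on isCont_cis2pi)

lemma cis2pi_local_inv:
  "\<exists>\<phi>. isCont \<phi> (cis2pi t) \<and> \<phi> (cis2pi t) = t \<and> (\<forall>w\<in>circ. cis2pi (\<phi> w) = w)"
proof -
  define c where "c = cis2pi t"
  define \<phi> where "\<phi> w = t + Im (Ln (w / c)) / (2 * pi)" for w
  have cnz: "c \<noteq> 0" unfolding c_def by simp
  have "isCont \<phi> c"
  proof -
    have "isCont (\<lambda>w. w / c) c" using cnz by (intro continuous_intros)
    moreover have "isCont Ln (c / c)"
      using cnz by (simp add: continuous_at_Ln)
    ultimately have "isCont (\<lambda>w. Ln (w / c)) c"
      using continuous_at_compose[of c "\<lambda>w. w / c" Ln] by (simp add: o_def)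
    then show ?thesis unfolding \<phi>_def by (intro continuous_intros) (auto intro: continuous_Im)
  qed
  moreover have "\<phi> c = t" using c_def by (simp add: \<phi>_def)
  moreover have "cis2pi (\<phi> w) = w" if "w \<in> circ" for w
  proof -
    have nw: "norm w = 1" using that by (simp add: circ_def)
    have nz: "w / c \<noteq> 0" using nw c_def by auto
    have nwc: "norm (w / c) = 1" using nw c_def by (simp add: norm_divide)
    have "Ln (w / c) = \<i> * of_real (Im (Ln (w / c)))"
      using nz nwc by (simp add: complex_eq_iff)
    hence e: "exp (\<i> * of_real (Im (Ln (w / c)))) = w / c"
      using nz by (metis exp_Ln)
    have "cis2pi (\<phi> w) = c * exp (2 * of_real pi * \<i> * of_real (Im (Ln (w / c)) / (2 * pi)))"
      unfolding \<phi>_def cis2pi_def c_def by (simp add: distrib_left exp_add)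
    also have "2 * of_real pi * \<i> * of_real (Im (Ln (w / c)) / (2 * pi)) = \<i> * of_real (Im (Ln (w / c)))"
      by (simp add: field_simps)
    finally show ?thesis using e c_def by simp
  qed
  ultimately show ?thesis unfolding c_def by blast
qed

lemma cont_from_param:
  assumes "isCont (\<lambda>s. h (cis2pi s)) t"
  shows "continuous (at (cis2pi t) within circ) h"
proof -
  obtain \<phi> where p: "isCont \<phi> (cis2pi t)" "\<phi> (cis2pi t) = t" "\<forall>w\<in>circ. cis2pi (\<phi> w) = w"
    using cis2pi_local_inv by blast
  have "isCont (\<lambda>w. h (cis2pi (\<phi> w))) (cis2pi t)"
    using continuous_at_compose[of "cis2pi t" \<phi> "\<lambda>s. h (cis2pi s)"] p assms by (simp add: o_def)
  hence c: "continuous (at (cis2pi t) within circ) (\<lambda>w. h (cis2pi (\<phi> w)))"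
    by (rule continuous_at_imp_continuous_at_within)
  show ?thesis
    unfolding continuous_within
  proof (rule Lim_transform_eventually)
    show "((\<lambda>w. h (cis2pi (\<phi> w))) \<longlongrightarrow> h (cis2pi t)) (at (cis2pi t) within circ)"
      using c p(2) unfolding continuous_within by simp
    show "\<forall>\<^sub>F x in at (cis2pi t) within circ. h (cis2pi (\<phi> x)) = h x"
      using p(3) by (auto simp: eventually_at_filter)
  qed
qed

lemma eventually_in_image:
  assumes "open I" "t \<in> I"
  shows "eventually (\<lambda>w. w \<in> cis2pi ` I) (at (cis2pi t) within circ)"
proof -
  obtain \<phi> where p: "isCont \<phi> (cis2pi t)" "\<phi> (cis2pi t) = t" "\<forall>w\<in>circ. cis2pi (\<phi> w) = w"
    using cis2pi_local_inv by blast
  have "continuous (at (cis2pi t) within circ) \<phi>"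
    using p(1) by (rule continuous_at_imp_continuous_at_within)
  hence "(\<phi> \<longlongrightarrow> t) (at (cis2pi t) within circ)"
    using p(2) unfolding continuous_within by simp
  hence ev1: "eventually (\<lambda>w. \<phi> w \<in> I) (at (cis2pi t) within circ)"
    using assms by (rule topological_tendstoD)
  have ev2: "eventually (\<lambda>w. w \<in> circ) (at (cis2pi t) within circ)"
    by (simp add: eventually_at_filter)
  show ?thesis using ev1 ev2
  proof eventually_elim
    case (elim w)
    then show ?case using p(3) by (metis image_eqI)
  qed
qed

lemma ev_left_shift:
  "eventually P (at_left (t + c)) \<longleftrightarrow> eventually (\<lambda>s. P (s + c)) (at_left (t::real))"
  unfolding eventually_at_left_field
proof
  assume "\<exists>b<t + c. \<forall>y>b. y < t + c \<longrightarrow> P y"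
  then obtain b where "b < t + c" "\<forall>y>b. y < t + c \<longrightarrow> P y" by blast
  then show "\<exists>b<t. \<forall>y>b. y < t \<longrightarrow> P (y + c)"
    by (intro exI[of _ "b - c"]) auto
next
  assume "\<exists>b<t. \<forall>y>b. y < t \<longrightarrow> P (y + c)"
  then obtain b where "b < t" "\<forall>y>b. y < t \<longrightarrow> P (y + c)" by blast
  then show "\<exists>b<t + c. \<forall>y>b. y < t + c \<longrightarrow> P y"
  proof (intro exI[of _ "b + c"] conjI allI impI)
    fix y assume "b + c < y" "y < t + c"
    then have "P ((y - c) + c)" using spec[OF \<open>\<forall>y>b. y < t \<longrightarrow> P (y + c)\<close>, of "y - c"] by linarith
    then show "P y" by simp
  qed (use \<open>b < t\<close> in simp)
qed

lemma ev_right_shift: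
  "eventually P (at_right (t + c)) \<longleftrightarrow> eventually (\<lambda>s. P (s + c)) (at_right (t::real))"
  unfolding eventually_at_right_field
proof
  assume "\<exists>b>t + c. \<forall>y>t + c. y < b \<longrightarrow> P y"
  then obtain b where "b > t + c" "\<forall>y>t + c. y < b \<longrightarrow> P y" by blast
  then show "\<exists>b>t. \<forall>y>t. y < b \<longrightarrow> P (y + c)"
    by (intro exI[of _ "b - c"]) auto
next
  assume "\<exists>b>t. \<forall>y>t. y < b \<longrightarrow> P (y + c)"
  then obtain b where "b > t" "\<forall>y>t. y < b \<longrightarrow> P (y + c)" by blast
  then show "\<exists>b>t + c. \<forall>y>t + c. y < b \<longrightarrow> P y"
  proof (intro exI[of _ "b + c"] conjI allI impI)
    fix y assume "t + c < y" "y < b + c"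
    then have "P ((y - c) + c)" using spec[OF \<open>\<forall>y>t. y < b \<longrightarrow> P (y + c)\<close>, of "y - c"] by linarith
    then show "P y" by simp
  qed (use \<open>b > t\<close> in simp)
qed

lemma tendsto_left_shift:
  "(f \<longlongrightarrow> L) (at_left (t + c)) \<longleftrightarrow> ((\<lambda>s. f (s + c)) \<longlongrightarrow> L) (at_left (t::real))"
  unfolding tendsto_def ev_left_shift ..

lemma tendsto_right_shift:
  "(f \<longlongrightarrow> L) (at_right (t + c)) \<longleftrightarrow> ((\<lambda>s. f (s + c)) \<longlongrightarrow> L) (at_right (t::real))"
  unfolding tendsto_def ev_right_shift ..

lemma jump_at_param:
  assumes "jump_at \<eta> z" "cis2pi u = z"
  shows "\<exists>L R. L \<noteq> R \<and> ((\<lambda>s. \<eta> (cis2pi s)) \<longlongrightarrow> L) (at_left u) \<and>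
      ((\<lambda>s. \<eta> (cis2pi s)) \<longlongrightarrow> R) (at_right u) \<and> (\<eta> z = L \<or> \<eta> z = R)"
proof -
  obtain t L R where j: "cis2pi t = z" "L \<noteq> R"
      "((\<lambda>s. \<eta> (cis2pi s)) \<longlongrightarrow> L) (at_left t)"
      "((\<lambda>s. \<eta> (cis2pi s)) \<longlongrightarrow> R) (at_right t)" "\<eta> z = L \<or> \<eta> z = R"
    using assms(1) unfolding jump_at_def by blast
  obtain k :: int where k: "t = u + of_int k"
    using j(1) assms(2) cis2pi_eq_iff by metis
  have per: "(\<lambda>s. \<eta> (cis2pi (s + of_int k))) = (\<lambda>s. \<eta> (cis2pi s))"
    by simp
  have "((\<lambda>s. \<eta> (cis2pi s)) \<longlongrightarrow> L) (at_left u)"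
    using j(3) unfolding k tendsto_left_shift per .
  moreover have "((\<lambda>s. \<eta> (cis2pi s)) \<longlongrightarrow> R) (at_right u)"
    using j(4) unfolding k tendsto_right_shift per .
  ultimately show ?thesis using j by blast
qed

lemma no_int_01: "0 < real_of_int k \<Longrightarrow> real_of_int k < 1 \<Longrightarrow> False"
proof -
  assume "0 < real_of_int k" "real_of_int k < 1"
  then have "0 < k" "k < 1" by simp_all
  then show False by linarith
qed

lemma no_int_m10: "-1 < real_of_int k \<Longrightarrow> real_of_int k < 0 \<Longrightarrow> False"
proof -
  assume "-1 < real_of_int k" "real_of_int k < 0"
  then have "-1 < k" "k < 0" by simp_all
  then show False by linarith
qed

lemma cis2pi_in_Icc_D:
  assumes "cis2pi s \<in> cis2pi ` {u..v}"
  obtains s' k where "s' \<in> {u..v}" "s = s' + real_of_int k"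
  using assms cis2pi_eq_iff by (metis imageE)

lemma cis2pi_notin_left:
  assumes "v - 1 < s" "s < u"
  shows "cis2pi s \<notin> cis2pi ` {u..v}"
proof
  assume "cis2pi s \<in> cis2pi ` {u..v}"
  then obtain s' k where "s' \<in> {u..v}" "s = s' + real_of_int k"
    by (rule cis2pi_in_Icc_D)
  then have "-1 < real_of_int k" "real_of_int k < 0" using assms by auto
  then show False by (rule no_int_m10)
qed

lemma cis2pi_notin_right:
  assumes "v < s" "s < u + 1"
  shows "cis2pi s \<notin> cis2pi ` {u..v}"
proof
  assume "cis2pi s \<in> cis2pi ` {u..v}"
  then obtain s' k where "s' \<in> {u..v}" "s = s' + real_of_int k"
    by (rule cis2pi_in_Icc_D)
  then have "0 < real_of_int k" "real_of_int k < 1" using assms by auto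
  then show False by (rule no_int_01)
qed

lemma sq_limit:
  assumes ps: "preimage_selector \<eta>" and lim: "((\<lambda>s. \<eta> (cis2pi s)) \<longlongrightarrow> L) F" and nt: "F \<noteq> bot"
    and lc: "(cis2pi \<longlongrightarrow> z) F"
  shows "L ^ 2 = z"
proof -
  have "((\<lambda>s. (\<eta> (cis2pi s)) ^ 2) \<longlongrightarrow> L ^ 2) F" using lim by (intro tendsto_intros)
  moreover have "(\<lambda>s. (\<eta> (cis2pi s)) ^ 2) = cis2pi"
    using ps unfolding preimage_selector_def E2_def by auto
  ultimately show ?thesis using lc nt tendsto_unique by metis
qed

lemma sq_norm1: "L ^ 2 = z \<Longrightarrow> z \<in> circ \<Longrightarrow> L \<in> circ"
proof -
  assume "L ^ 2 = z" "z \<in> circ"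
  hence "norm L ^ 2 = 1" by (auto simp: circ_def norm_power[symmetric])
  hence "norm L = 1 \<or> norm L = -1" by (simp add: power2_eq_1_iff)
  hence "norm L = 1" using norm_ge_zero[of L] by linarith
  thus "L \<in> circ" by (simp add: circ_def)
qed


lemma flip_arc:
  assumes ps: "preimage_selector \<eta>"
    and uv: "u < v" "v < u + 1"
    and aD: "cis2pi u \<in> discont \<eta>" and bD: "cis2pi v \<in> discont \<eta>"
    and gap: "\<forall>s\<in>{u<..<v}. cis2pi s \<notin> discont \<eta>"
  shows "\<exists>\<eta>'. preimage_selector \<eta>' \<and> discont \<eta>' = discont \<eta> - {cis2pi u, cis2pi v}
     \<and> closure (\<eta> ` circ) \<subseteq> closure (\<eta> ` cis2pi ` {u<..<v}) \<union> closure (\<eta>' ` circ)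
     \<and> \<eta> ` cis2pi ` {u<..<v} \<inter> closure (\<eta>' ` circ) = {}"
proof -
  define D where "D = discont \<eta>"
  define a where "a = cis2pi u"
  define b where "b = cis2pi v"
  define A where "A = cis2pi ` {u<..<v}"
  define B where "B = cis2pi ` {u..v}"
  define g where "g s = \<eta> (cis2pi s)" for s
  have psv: "\<And>z. z \<in> circ \<Longrightarrow> \<eta> z \<in> circ \<and> (\<eta> z) ^ 2 = z"
    using ps unfolding preimage_selector_def E2_def by auto
  have fD: "finite D" using ps unfolding preimage_selector_def D_def by auto
  have jD: "\<And>z. z \<in> D \<Longrightarrow> jump_at \<eta> z" using ps unfolding preimage_selector_def D_def by auto
  have ab: "a \<noteq> b"
  proof
    assume "a = b"
    then obtain k :: int where "u = v + real_of_int k" unfolding a_def b_def cis2pi_eq_iff by blast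
    then have "-1 < real_of_int k" "real_of_int k < 0" using uv by auto
    then show False by (rule no_int_m10)
  qed
  have aA: "a \<notin> A"
  proof
    assume "a \<in> A"
    then obtain s where s: "s \<in> {u<..<v}" "cis2pi u = cis2pi s" unfolding A_def a_def by auto
    then obtain k :: int where "u = s + real_of_int k" unfolding cis2pi_eq_iff by blast
    then have "-1 < real_of_int k" "real_of_int k < 0" using uv s by auto
    then show False by (rule no_int_m10)
  qed
  have bA: "b \<notin> A"
  proof
    assume "b \<in> A"
    then obtain s where s: "s \<in> {u<..<v}" "cis2pi v = cis2pi s" unfolding A_def b_def by auto
    then obtain k :: int where "v = s + real_of_int k" unfolding cis2pi_eq_iff by blast
    then have "0 < real_of_int k" "real_of_int k < 1" using uv s by auto
    then show False by (rule no_int_01)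
  qed
  have AD: "A \<inter> D = {}" using gap unfolding A_def D_def by auto
  have Bc: "closed B"
    unfolding B_def by (intro compact_imp_closed compact_continuous_image continuous_on_cis2pi compact_Icc)
  have BA: "B = A \<union> {a, b}"
  proof -
    have "{u..v} = {u<..<v} \<union> {u, v}" using uv by auto
    then show ?thesis unfolding B_def A_def a_def b_def by auto
  qed
  have Acirc: "A \<subseteq> circ" unfolding A_def by auto
  have acirc: "a \<in> circ" "b \<in> circ" unfolding a_def b_def by auto
  obtain La Ra where ja: "La \<noteq> Ra" "(g \<longlongrightarrow> La) (at_left u)" "(g \<longlongrightarrow> Ra) (at_right u)" "\<eta> a = La \<or> \<eta> a = Ra"
    using jump_at_param[OF jD[OF aD[folded D_def]], of u] unfolding g_def a_def by blast
  obtain Lb Rb where jb: "Lb \<noteq> Rb" "(g \<longlongrightarrow> Lb) (at_left v)" "(g \<longlongrightarrow> Rb) (at_right v)" "\<eta> b = Lb \<or> \<eta> b = Rb"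
    using jump_at_param[OF jD[OF bD[folded D_def]], of v] unfolding g_def b_def by blast
  have cl: "(cis2pi \<longlongrightarrow> cis2pi t) (at_left t)" "(cis2pi \<longlongrightarrow> cis2pi t) (at_right t)" for t
    using isCont_cis2pi[of t] unfolding isCont_def filterlim_at_split by auto
  have La2: "La ^ 2 = a" using sq_limit[OF ps ja(2)[unfolded g_def] _ cl(1)] unfolding a_def by simp
  have Ra2: "Ra ^ 2 = a" using sq_limit[OF ps ja(3)[unfolded g_def] _ cl(2)] unfolding a_def by simp
  have Lb2: "Lb ^ 2 = b" using sq_limit[OF ps jb(2)[unfolded g_def] _ cl(1)] unfolding b_def by simp
  have Rb2: "Rb ^ 2 = b" using sq_limit[OF ps jb(3)[unfolded g_def] _ cl(2)] unfolding b_def by simp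
  have RaLa: "Ra = - La" using La2 Ra2 ja(1) power2_eq_iff by metis
  have RbLb: "Rb = - Lb" using Lb2 Rb2 jb(1) power2_eq_iff by metis
  define \<eta>' where "\<eta>' z = (if z \<in> A then - \<eta> z else if z = a then La else if z = b then Rb else \<eta> z)" for z
  have outside: "\<eta>' z = \<eta> z" if "z \<notin> B" for z
    using that unfolding \<eta>'_def BA by auto
  have ev_out: "eventually (\<lambda>w. w \<notin> B) (at z within circ)" if "z \<notin> B" for z
  proof -
    have "eventually (\<lambda>w. w \<in> - B) (nhds z)"
      using Bc that by (intro eventually_nhds_in_open) auto
    then show ?thesis unfolding eventually_at_filter by (auto elim: eventually_mono)
  qed
  have cont_eq: "continuous (at z within circ) \<eta>' \<longleftrightarrow> continuous (at z within circ) \<eta>" if "z \<notin> B" for z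
  proof -
    have "eventually (\<lambda>w. \<eta>' w = \<eta> w) (at z within circ)"
      using ev_out[OF that] by (auto elim: eventually_mono simp: outside)
    then show ?thesis unfolding continuous_within outside[OF that]
      by (rule tendsto_cong)
  qed
  have contA: "continuous (at z within circ) \<eta>'" if zA: "z \<in> A" for z
  proof -
    obtain s where s: "s \<in> {u<..<v}" "z = cis2pi s" using zA unfolding A_def by auto
    have zc: "z \<in> circ" "z \<notin> D" using that Acirc AD by auto
    have c: "continuous (at z within circ) \<eta>" using zc unfolding D_def discont_def by auto
    have ev: "eventually (\<lambda>w. w \<in> A) (at z within circ)"
      using eventually_in_image[of "{u<..<v}" s] s unfolding A_def by auto
    have "eventually (\<lambda>w. - \<eta> w = \<eta>' w) (at z within circ)"
      using ev by (auto elim: eventually_mono simp: \<eta>'_def)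
    moreover have "((\<lambda>w. - \<eta> w) \<longlongrightarrow> - \<eta> z) (at z within circ)"
      using c unfolding continuous_within by (intro tendsto_intros)
    ultimately have "(\<eta>' \<longlongrightarrow> - \<eta> z) (at z within circ)"
      by (rule Lim_transform_eventually[rotated])
    then show ?thesis unfolding continuous_within using that by (simp add: \<eta>'_def)
  qed
  define g' where "g' s = \<eta>' (cis2pi s)" for s
  have conta: "continuous (at a within circ) \<eta>'"
  proof -
    have "eventually (\<lambda>s. s \<in> {v - 1<..<u}) (at_left u)"
      using uv by (intro eventually_at_leftI[of "v - 1"]) auto
    then have "eventually (\<lambda>s. g s = g' s) (at_left u)"
      by (rule eventually_mono) (use cis2pi_notin_left outside in \<open>auto simp: g_def g'_def B_def\<close>)
    then have l: "(g' \<longlongrightarrow> La) (at_left u)" using ja(2) by (rule Lim_transform_eventually[rotated])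
    have "eventually (\<lambda>s. s \<in> {u<..<v}) (at_right u)"
      using uv by (intro eventually_at_rightI[of _ v]) auto
    then have "eventually (\<lambda>s. - g s = g' s) (at_right u)"
      by (rule eventually_mono) (auto simp: g_def g'_def \<eta>'_def A_def)
    moreover have "((\<lambda>s. - g s) \<longlongrightarrow> La) (at_right u)"
      using tendsto_minus[OF ja(3)] RaLa by simp
    ultimately have r: "(g' \<longlongrightarrow> La) (at_right u)" by (rule Lim_transform_eventually[rotated])
    have "g' u = La" unfolding g'_def \<eta>'_def using aA by (simp add: a_def)
    then have "isCont g' u" unfolding isCont_def using filterlim_split_at[OF l r] by simp
    then show ?thesis unfolding a_def g'_def by (rule cont_from_param)
  qed
  have contb: "continuous (at b within circ) \<eta>'"
  proof -
    have "eventually (\<lambda>s. s \<in> {v<..<u + 1}) (at_right v)"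
      using uv by (intro eventually_at_rightI[of _ "u + 1"]) auto
    then have "eventually (\<lambda>s. g s = g' s) (at_right v)"
      by (rule eventually_mono) (use cis2pi_notin_right outside in \<open>auto simp: g_def g'_def B_def\<close>)
    then have r: "(g' \<longlongrightarrow> Rb) (at_right v)" using jb(3) by (rule Lim_transform_eventually[rotated])
    have "eventually (\<lambda>s. s \<in> {u<..<v}) (at_left v)"
      using uv by (intro eventually_at_leftI[of u]) auto
    then have "eventually (\<lambda>s. - g s = g' s) (at_left v)"
      by (rule eventually_mono) (auto simp: g_def g'_def \<eta>'_def A_def)
    moreover have "((\<lambda>s. - g s) \<longlongrightarrow> Rb) (at_left v)"
      using tendsto_minus[OF jb(2)] RbLb by simp
    ultimately have l: "(g' \<longlongrightarrow> Rb) (at_left v)" by (rule Lim_transform_eventually[rotated])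
    have "g' v = Rb" unfolding g'_def \<eta>'_def using bA ab by (simp add: b_def a_def)
    then have "isCont g' v" unfolding isCont_def using filterlim_split_at[OF l r] by simp
    then show ?thesis unfolding b_def g'_def by (rule cont_from_param)
  qed
  have disc: "discont \<eta>' = D - {a, b}"
  proof (intro set_eqI iffI)
    fix z assume z: "z \<in> discont \<eta>'"
    then have zc: "z \<in> circ" "\<not> continuous (at z within circ) \<eta>'" unfolding discont_def by auto
    then have "z \<notin> A" "z \<noteq> a" "z \<noteq> b" using contA conta contb by auto
    then have "z \<notin> B" unfolding BA by auto
    then show "z \<in> D - {a, b}" using zc cont_eq \<open>z \<noteq> a\<close> \<open>z \<noteq> b\<close> unfolding D_def discont_def by auto
  next
    fix z assume z: "z \<in> D - {a, b}"
    then have "z \<notin> A" using AD by auto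
    then have "z \<notin> B" using z unfolding BA by auto
    then show "z \<in> discont \<eta>'" using z cont_eq unfolding D_def discont_def by auto
  qed
  have jumps: "jump_at \<eta>' z" if z: "z \<in> D - {a, b}" for z
  proof -
    obtain t Lz Rz where j: "cis2pi t = z" "Lz \<noteq> Rz"
      "((\<lambda>s. \<eta> (cis2pi s)) \<longlongrightarrow> Lz) (at_left t)"
      "((\<lambda>s. \<eta> (cis2pi s)) \<longlongrightarrow> Rz) (at_right t)" "\<eta> z = Lz \<or> \<eta> z = Rz"
      using jD z unfolding jump_at_def by blast
    have zB: "z \<notin> B" using z AD unfolding BA by auto
    have "eventually (\<lambda>s. cis2pi s \<in> - B) (at t)"
      using isCont_cis2pi[of t] Bc zB j(1) unfolding isCont_def
      by (intro topological_tendstoD) auto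
    then have ev: "eventually (\<lambda>s. \<eta> (cis2pi s) = \<eta>' (cis2pi s)) (at t)"
      by (rule eventually_mono) (simp add: outside)
    have evl: "eventually (\<lambda>s. \<eta> (cis2pi s) = \<eta>' (cis2pi s)) (at_left t)"
      and evr: "eventually (\<lambda>s. \<eta> (cis2pi s) = \<eta>' (cis2pi s)) (at_right t)"
      using ev unfolding at_eq_sup_left_right[of t] eventually_sup by auto
    have "((\<lambda>s. \<eta>' (cis2pi s)) \<longlongrightarrow> Lz) (at_left t)"
      using j(3) evl by (rule Lim_transform_eventually)
    moreover have "((\<lambda>s. \<eta>' (cis2pi s)) \<longlongrightarrow> Rz) (at_right t)"
      using j(4) evr by (rule Lim_transform_eventually)
    moreover have "\<eta>' z = \<eta> z" using outside zB by simp
    ultimately show ?thesis unfolding jump_at_def using j by blast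
  qed
  have vals: "\<eta>' z \<in> circ \<and> E2 (\<eta>' z) = z" if "z \<in> circ" for z
  proof -
    have "z \<in> A \<or> (z \<notin> A \<and> z = a) \<or> (z \<notin> A \<and> z \<noteq> a \<and> z = b) \<or> (z \<notin> A \<and> z \<noteq> a \<and> z \<noteq> b)" by blast
    then show ?thesis
    proof (elim disjE conjE)
      assume "z \<in> A" then show ?thesis using psv[OF that] by (simp add: \<eta>'_def E2_def circ_def)
    next
      assume "z \<notin> A" "z = a" then show ?thesis using La2 sq_norm1[OF La2 acirc(1)] by (simp add: \<eta>'_def E2_def)
    next
      assume "z \<notin> A" "z \<noteq> a" "z = b" then show ?thesis using Rb2 sq_norm1[OF Rb2 acirc(2)] by (simp add: \<eta>'_def E2_def)
    next
      assume "z \<notin> A" "z \<noteq> a" "z \<noteq> b" then show ?thesis using psv[OF that] by (simp add: \<eta>'_def E2_def)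
    qed
  qed
  have ps': "preimage_selector \<eta>'"
    unfolding preimage_selector_def using vals disc fD jumps by auto
  have cover: "closure (\<eta> ` circ) \<subseteq> closure (\<eta> ` A) \<union> closure (\<eta>' ` circ)"
  proof (rule closure_minimal)
    show "closed (closure (\<eta> ` A) \<union> closure (\<eta>' ` circ))" by auto
    have Ra_in: "Ra \<in> closure (\<eta> ` A)"
    proof (rule Lim_in_closed_set[OF closed_closure _ _ ja(3)])
      have "eventually (\<lambda>s. s \<in> {u<..<v}) (at_right u)"
        using uv by (intro eventually_at_rightI[of _ v]) auto
      then show "eventually (\<lambda>s. g s \<in> closure (\<eta> ` A)) (at_right u)"
        by (rule eventually_mono) (auto simp: g_def A_def intro!: closure_subset[THEN subsetD])
    qed simp
    have Lb_in: "Lb \<in> closure (\<eta> ` A)"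
    proof (rule Lim_in_closed_set[OF closed_closure _ _ jb(2)])
      have "eventually (\<lambda>s. s \<in> {u<..<v}) (at_left v)"
        using uv by (intro eventually_at_leftI[of u]) auto
      then show "eventually (\<lambda>s. g s \<in> closure (\<eta> ` A)) (at_left v)"
        by (rule eventually_mono) (auto simp: g_def A_def intro!: closure_subset[THEN subsetD])
    qed simp
    show "\<eta> ` circ \<subseteq> closure (\<eta> ` A) \<union> closure (\<eta>' ` circ)"
    proof
      fix y assume "y \<in> \<eta> ` circ"
      then obtain z where z: "z \<in> circ" "y = \<eta> z" by auto
      have ina: "\<eta>' a \<in> closure (\<eta>' ` circ)" "\<eta>' b \<in> closure (\<eta>' ` circ)"
        using acirc by (auto intro!: closure_subset[THEN subsetD])
      have "\<eta>' a = La" "\<eta>' b = Rb" using aA bA ab by (auto simp: \<eta>'_def)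
      consider "z \<in> A" | "z = a" | "z = b" | "z \<notin> B" unfolding BA by auto
      then show "y \<in> closure (\<eta> ` A) \<union> closure (\<eta>' ` circ)"
      proof cases
        case 1 then show ?thesis using z by (auto intro!: closure_subset[THEN subsetD])
      next
        case 2 then show ?thesis using z ja(4) Ra_in ina \<open>\<eta>' a = La\<close> by auto
      next
        case 3 then show ?thesis using z jb(4) Lb_in ina \<open>\<eta>' b = Rb\<close> by auto
      next
        case 4
        have "y \<in> \<eta>' ` circ" using z outside[OF 4] by (metis image_eqI)
        then show ?thesis by (intro UnI2 closure_subset[THEN subsetD])
      qed
    qed
  qed
  have disj: "\<eta> ` A \<inter> closure (\<eta>' ` circ) = {}"
  proof (rule ccontr)
    assume "\<eta> ` A \<inter> closure (\<eta>' ` circ) \<noteq> {}"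
    then obtain z0 where z0: "z0 \<in> A" "\<eta> z0 \<in> closure (\<eta>' ` circ)" by auto
    define y where "y = \<eta> z0"
    have z0c: "z0 \<in> circ" "z0 \<notin> D" using z0 Acirc AD by auto
    have yc: "y \<in> circ" "y ^ 2 = z0" using psv[OF z0c(1)] y_def by auto
    obtain x where x: "\<And>n. x n \<in> \<eta>' ` circ" "x \<longlonglongrightarrow> y"
      using z0(2) unfolding y_def closure_sequential by blast
    define w where "w n = (x n) ^ 2" for n
    have w: "w n \<in> circ" "\<eta>' (w n) = x n" for n
    proof -
      obtain c where c: "c \<in> circ" "x n = \<eta>' c" using x(1)[of n] by auto
      have "w n = c" using vals[OF c(1)] c(2) unfolding w_def E2_def by simp
      then show "w n \<in> circ" "\<eta>' (w n) = x n" using c by auto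
    qed
    have wl: "w \<longlonglongrightarrow> z0" unfolding w_def using tendsto_power[OF x(2), of 2] yc by simp
    obtain s0 where s0: "s0 \<in> {u<..<v}" "z0 = cis2pi s0" using z0 unfolding A_def by auto
    have "eventually (\<lambda>w. w \<in> A) (at z0 within circ)"
      using eventually_in_image[of "{u<..<v}" s0] s0 unfolding A_def by auto
    then obtain Ov where Ov: "open Ov" "z0 \<in> Ov" "\<forall>x\<in>Ov. x \<noteq> z0 \<longrightarrow> x \<in> circ \<longrightarrow> x \<in> A"
      unfolding eventually_at_topological by blast
    have "eventually (\<lambda>n. w n \<in> Ov) sequentially"
      using wl Ov by (intro topological_tendstoD) auto
    then have evA: "eventually (\<lambda>n. w n \<in> A) sequentially"
      by (rule eventually_mono) (use Ov w z0 in auto)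
    have c: "continuous (at z0 within circ) \<eta>" using z0c unfolding D_def discont_def by auto
    have "(\<lambda>n. \<eta> (w n)) \<longlonglongrightarrow> y"
      unfolding y_def by (rule continuous_within_tendsto_compose'[OF c w(1) wl])
    then have "(\<lambda>n. - \<eta> (w n)) \<longlonglongrightarrow> - y" by (rule tendsto_minus)
    moreover have "eventually (\<lambda>n. - \<eta> (w n) = x n) sequentially"
      using evA by (rule eventually_mono) (metis w(2) \<eta>'_def)
    ultimately have "x \<longlonglongrightarrow> - y" by (rule Lim_transform_eventually)
    then have "y = - y" using x(2) LIMSEQ_unique by blast
    then have "y = 0" by simp
    then show False using yc by (simp add: circ_def)
  qed
  show ?thesis
    using ps' disc cover disj unfolding D_def a_def b_def A_def by blast
qed

lemma circ_surj: "z \<in> circ \<Longrightarrow> \<exists>s. cis2pi s = z"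
  using cis2pi_local_inv[of 0] by blast

lemma finite_preimg: "finite {s\<in>{a..b}. cis2pi s = z}"
proof (cases "\<exists>t0. cis2pi t0 = z")
  case False
  then have "{s\<in>{a..b}. cis2pi s = z} = {}" by auto
  then show ?thesis by (metis finite.emptyI)
next
  case True
  then obtain t0 where t0: "cis2pi t0 = z" by blast
  have "{s\<in>{a..b}. cis2pi s = z} \<subseteq> (\<lambda>k. t0 + of_int k) ` {\<lfloor>a - t0\<rfloor>..\<lceil>b - t0\<rceil>}"
  proof
    fix s assume s: "s \<in> {s\<in>{a..b}. cis2pi s = z}"
    then have "cis2pi s = cis2pi t0" using t0 by simp
    then obtain k :: int where k: "s = t0 + of_int k" unfolding cis2pi_eq_iff by blast
    have "a - t0 \<le> of_int k" "of_int k \<le> b - t0" using s k by auto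
    then have "\<lfloor>a - t0\<rfloor> \<le> k" "k \<le> \<lceil>b - t0\<rceil>"
      by (simp_all add: floor_le_iff le_ceiling_iff)
    then show "s \<in> (\<lambda>k. t0 + of_int k) ` {\<lfloor>a - t0\<rfloor>..\<lceil>b - t0\<rceil>}" using k by (intro image_eqI[of _ _ k]) auto
  qed
  then show ?thesis by (rule finite_subset) simp
qed

lemma finite_S: "finite D \<Longrightarrow> finite {s\<in>{a..b}. cis2pi s \<in> D}"
proof -
  assume fD: "finite D"
  have "{s\<in>{a..b}. cis2pi s \<in> D} = (\<Union>z\<in>D. {s\<in>{a..b}. cis2pi s = z})" by auto
  then show ?thesis using fD finite_preimg by simp
qed

lemma ev_notin:
  assumes "finite D"
  shows "eventually (\<lambda>s. cis2pi s \<notin> D) (at t)"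
proof -
  define E where "E = {s\<in>{t-1..t+1}. cis2pi s \<in> D}"
  have fE: "finite E" unfolding E_def using finite_S[OF assms] .
  have e1: "eventually (\<lambda>s. \<forall>y\<in>E. s \<noteq> y) (at t)"
    using fE by (intro eventually_ball_finite) (auto intro: eventually_neq_at_within)
  have "eventually (\<lambda>s. s \<in> {t-1<..<t+1}) (nhds t)"
    by (intro eventually_nhds_in_open) auto
  then have e2: "eventually (\<lambda>s. s \<in> {t-1<..<t+1}) (at t)"
    unfolding eventually_at_filter by (auto elim: eventually_mono)
  show ?thesis using e1 e2
  proof eventually_elim
    case (elim s)
    show ?case
    proof
      assume "cis2pi s \<in> D"
      then have "s \<in> E" using elim(2) unfolding E_def by auto
      then show False using elim(1) by blast
    qed
  qed
qed

lemma cover_arc: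
  assumes fD: "finite D" and ne: "D \<noteq> {}" and Dc: "D \<subseteq> circ"
    and z: "z \<in> circ" "z \<notin> D"
  shows "\<exists>u v. u \<in> {0..3} \<and> v \<in> {0..3} \<and> cis2pi u \<in> D \<and> cis2pi v \<in> D \<and> u < v \<and>
     (\<forall>s\<in>{u<..<v}. cis2pi s \<notin> D) \<and> z \<in> cis2pi ` {u<..<v}"
proof -
  obtain s0 where s0: "cis2pi s0 = z" using circ_surj z by blast
  define s where "s = s0 + of_int (1 - \<lfloor>s0\<rfloor>)"
  have cs: "cis2pi s = z" unfolding s_def cis2pi_int using s0 .
  have s12: "1 \<le> s" "s < 2" unfolding s_def by linarith+
  obtain d where d: "d \<in> D" using ne by blast
  obtain t0 where t0: "cis2pi t0 = d" using circ_surj d Dc by blast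
  define t1 where "t1 = t0 + of_int \<lceil>s - 1 - t0\<rceil>"
  have t1: "cis2pi t1 = d" "s - 1 \<le> t1" "t1 < s" unfolding t1_def using t0 by (simp, linarith+)
  define T1 where "T1 = {x\<in>{s-1..s}. cis2pi x \<in> D}"
  have fT1: "finite T1" unfolding T1_def by (rule finite_S[OF fD])
  have t1T1: "t1 \<in> T1" unfolding T1_def using t1 d by auto
  define u where "u = Max T1"
  have uT1: "u \<in> T1" unfolding u_def using fT1 t1T1 by (intro Max_in) auto
  have uge: "x \<le> u" if "x \<in> T1" for x unfolding u_def using fT1 that by simp
  have us: "s - 1 \<le> u" "u < s" "cis2pi u \<in> D"
  proof -
    show "s - 1 \<le> u" "cis2pi u \<in> D" using uT1 unfolding T1_def by auto
    have "u \<le> s" using uT1 unfolding T1_def by auto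
    moreover have "u \<noteq> s" using uT1 cs z unfolding T1_def by auto
    ultimately show "u < s" by simp
  qed
  define T2 where "T2 = {x\<in>{s..s+1}. cis2pi x \<in> D}"
  have fT2: "finite T2" unfolding T2_def by (rule finite_S[OF fD])
  have cu1: "cis2pi (u + 1) = cis2pi u" using cis2pi_int[of u 1] by simp
  have u1T2: "u + 1 \<in> T2" unfolding T2_def using us cu1 by auto
  define v where "v = Min T2"
  have vT2: "v \<in> T2" unfolding v_def using fT2 u1T2 by (intro Min_in) auto
  have vle: "v \<le> x" if "x \<in> T2" for x unfolding v_def using fT2 that by simp
  have vs: "s < v" "v \<le> u + 1" "cis2pi v \<in> D"
  proof -
    show "v \<le> u + 1" using vle u1T2 by simp
    show "cis2pi v \<in> D" using vT2 unfolding T2_def by auto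
    have "s \<le> v" using vT2 unfolding T2_def by auto
    moreover have "v \<noteq> s" using vT2 cs z unfolding T2_def by auto
    ultimately show "s < v" by simp
  qed
  have gap: "\<forall>w\<in>{u<..<v}. cis2pi w \<notin> D"
  proof (intro ballI notI)
    fix w assume w: "w \<in> {u<..<v}" "cis2pi w \<in> D"
    show False
    proof (cases "w \<le> s")
      case True
      then have "w \<in> T1" using w us unfolding T1_def by auto
      then have "w \<le> u" by (rule uge)
      then show False using w(1) by simp
    next
      case False
      then have "w \<in> T2" using w us vs unfolding T2_def by auto
      then have "v \<le> w" by (rule vle)
      then show False using w(1) by simp
    qed
  qed
  have "z \<in> cis2pi ` {u<..<v}" using cs us vs by (intro image_eqI[of _ _ s]) auto
  moreover have "u \<in> {0..3}" "v \<in> {0..3}" using us vs s12 by auto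
  ultimately show ?thesis using us vs gap by (intro exI[of _ u] exI[of _ v]) simp
qed


lemma arc_select:
  assumes ps: "preimage_selector \<eta>" and card3: "card (discont \<eta>) \<ge> 3"
    and P: "P \<in> components (closure (\<eta> ` circ))"
  shows "\<exists>u v. u < v \<and> v < u + 1 \<and> cis2pi u \<in> discont \<eta> \<and> cis2pi v \<in> discont \<eta> \<and>
     (\<forall>s\<in>{u<..<v}. cis2pi s \<notin> discont \<eta>) \<and> closure (\<eta> ` cis2pi ` {u<..<v}) \<subseteq> P"
proof -
  define D where "D = discont \<eta>"
  have fD: "finite D" using card3 unfolding D_def by (metis card.infinite not_numeral_le_zero)
  have ne: "D \<noteq> {}" using card3 unfolding D_def by auto
  have Dc: "D \<subseteq> circ" unfolding D_def discont_def by auto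
  have jD: "\<And>z. z \<in> D \<Longrightarrow> jump_at \<eta> z" using ps unfolding preimage_selector_def D_def by auto
  define S' where "S' = {s\<in>{0..3}. cis2pi s \<in> D}"
  have fS': "finite S'" unfolding S'_def by (rule finite_S[OF fD])
  define Q where "Q = {(u, v). u \<in> S' \<and> v \<in> S' \<and> u < v \<and> (\<forall>s\<in>{u<..<v}. cis2pi s \<notin> D)}"
  have fQ: "finite Q" by (rule finite_subset[of _ "S' \<times> S'"]) (use fS' in \<open>auto simp: Q_def\<close>)
  define K where "K = (\<Union>(u, v)\<in>Q. closure (\<eta> ` cis2pi ` {u<..<v}))"
  have Kc: "closed K" unfolding K_def using fQ by (intro closed_UN) auto
  have K1: "\<eta> z \<in> K" if zz: "z \<in> circ" "z \<notin> D" for z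
  proof -
    obtain u v where uv: "u \<in> {0..3}" "v \<in> {0..3}" "cis2pi u \<in> D" "cis2pi v \<in> D" "u < v"
      "\<forall>s\<in>{u<..<v}. cis2pi s \<notin> D" "z \<in> cis2pi ` {u<..<v}"
      using cover_arc[OF fD ne Dc zz] by blast
    have "(u, v) \<in> Q" unfolding Q_def S'_def using uv by auto
    moreover have "\<eta> z \<in> closure (\<eta> ` cis2pi ` {u<..<v})"
      using uv(7) by (auto intro!: closure_subset[THEN subsetD])
    ultimately show ?thesis unfolding K_def by blast
  qed
  have K2: "\<eta> d \<in> K" if d: "d \<in> D" for d
  proof -
    obtain t where t: "cis2pi t = d" using circ_surj d Dc by blast
    obtain L R where j: "((\<lambda>s. \<eta> (cis2pi s)) \<longlongrightarrow> L) (at_left t)"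
      "((\<lambda>s. \<eta> (cis2pi s)) \<longlongrightarrow> R) (at_right t)" "\<eta> d = L \<or> \<eta> d = R"
      using jump_at_param[OF jD[OF d] t] by blast
    have ev: "eventually (\<lambda>s. \<eta> (cis2pi s) \<in> K) (at t)"
      using ev_notin[OF fD, of t] by (rule eventually_mono) (simp add: K1)
    have "L \<in> K"
      by (rule Lim_in_closed_set[OF Kc _ _ j(1)])
         (use ev in \<open>auto simp: at_eq_sup_left_right[of t] eventually_sup\<close>)
    moreover have "R \<in> K"
      by (rule Lim_in_closed_set[OF Kc _ _ j(2)])
         (use ev in \<open>auto simp: at_eq_sup_left_right[of t] eventually_sup\<close>)
    ultimately show ?thesis using j(3) by auto
  qed
  have FK: "closure (\<eta> ` circ) \<subseteq> K"
  proof (rule closure_minimal[OF _ Kc])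
    show "\<eta> ` circ \<subseteq> K"
    proof
      fix y assume "y \<in> \<eta> ` circ"
      then obtain z where z: "z \<in> circ" "y = \<eta> z" by auto
      show "y \<in> K" using K1[OF z(1)] K2 z(2) by (cases "z \<in> D") auto
    qed
  qed
  obtain x where x: "x \<in> P" using in_components_nonempty[OF P] by blast
  have "x \<in> closure (\<eta> ` circ)" using x P in_components_subset by blast
  then have "x \<in> K" using FK by blast
  then obtain u v where uvQ: "(u, v) \<in> Q" and xC: "x \<in> closure (\<eta> ` cis2pi ` {u<..<v})"
    unfolding K_def by blast
  have uv: "u \<in> S'" "v \<in> S'" "u < v" "\<forall>s\<in>{u<..<v}. cis2pi s \<notin> D" using uvQ unfolding Q_def by auto
  define A where "A = cis2pi ` {u<..<v}"
  have Ac: "A \<subseteq> circ" unfolding A_def by auto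
  have conA: "connected A" unfolding A_def
    by (rule connected_continuous_image[OF continuous_on_cis2pi connected_Ioo])
  have contA: "continuous_on A \<eta>"
    unfolding continuous_on_eq_continuous_within
  proof -
    show "\<forall>z\<in>A. continuous (at z within A) \<eta>"
    proof
      fix z assume z: "z \<in> A"
      then have "z \<in> circ" "z \<notin> D" using Ac uv(4) unfolding A_def by auto
      then have "continuous (at z within circ) \<eta>" unfolding D_def discont_def by auto
      then show "continuous (at z within A) \<eta>" using Ac by (rule continuous_within_subset)
    qed
  qed
  have conC: "connected (closure (\<eta> ` A))"
    by (rule connected_imp_connected_closure, rule connected_continuous_image[OF contA conA])
  have CF: "closure (\<eta> ` A) \<subseteq> closure (\<eta> ` circ)" using Ac by (intro closure_mono image_mono)
  have CP: "closure (\<eta> ` A) \<subseteq> P"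
    by (rule components_maximal[OF P conC CF]) (use x xC A_def in blast)
  have cu1: "cis2pi (u + 1) = cis2pi u" using cis2pi_int[of u 1] by simp
  have vu1: "v < u + 1"
  proof (rule ccontr)
    assume "\<not> v < u + 1"
    then have "u + 1 \<le> v" by simp
    moreover have "u + 1 \<notin> {u<..<v}"
    proof
      assume "u + 1 \<in> {u<..<v}"
      then have "cis2pi (u + 1) \<notin> D" using uv(4) by blast
      then show False using cu1 uv(1) unfolding S'_def by auto
    qed
    ultimately have v1: "v = u + 1" by auto
    have "D \<subseteq> {cis2pi u}"
    proof
      fix d assume d: "d \<in> D"
      obtain s where s: "cis2pi s = d" using circ_surj d Dc by blast
      define s' where "s' = s + of_int (- \<lfloor>s - u\<rfloor>)"
      have cs': "cis2pi s' = d" unfolding s'_def cis2pi_int using s .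
      have "u \<le> s'" "s' < u + 1" unfolding s'_def by linarith+
      then have "s' = u \<or> s' \<in> {u<..<v}" using v1 by auto
      then have "s' = u" using uv(4) cs' d by auto
      then show "d \<in> {cis2pi u}" using cs' by simp
    qed
    then have "card D \<le> 1" using card_mono[of "{cis2pi u}" D] by simp
    then show False using card3 unfolding D_def by simp
  qed
  show ?thesis
    using uv vu1 CP unfolding S'_def D_def A_def by blast
qed

lemma null_compl_supp:
  assumes "sets \<mu> = sets (borel :: complex measure)"
  shows "- supp \<mu> \<in> null_sets \<mu>"
proof -
  define G where "G = {U :: complex set. open U \<and> emeasure \<mu> U = 0}"
  have eq: "- supp \<mu> = \<Union>G"
    unfolding supp_def G_def by (auto simp: not_less)
  obtain G' where G': "G' \<subseteq> G" "countable G'" "\<Union>G' = \<Union>G"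
    using Lindelof[of G] unfolding G_def by blast
  have "(\<Union>U\<in>G'. U) \<in> null_sets \<mu>"
  proof (rule null_sets_UN'[OF G'(2)])
    fix U assume "U \<in> G'"
    then have "open U" "emeasure \<mu> U = 0" using G' unfolding G_def by auto
    then show "U \<in> null_sets \<mu>" using assms by (auto simp: null_sets_def borel_open)
  qed
  then show ?thesis using eq G'(3) by simp
qed


theorem lemma4:
  fixes \<mu> :: "complex measure" and F P :: "complex set" and p :: nat
  assumes "E2_invariant_prob \<mu>"
    and "p \<ge> 3"
    and "flower p F"
    and "supp \<mu> \<subseteq> F"
    and "P \<in> petals F"
    and "emeasure \<mu> P = 0"
  shows "\<exists>F'. flower (p - 2) F' \<and> supp \<mu> \<subseteq> F' \<and> \<not> P \<subseteq> F'"
proof -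
  have sets: "sets \<mu> = sets borel" using assms(1) unfolding E2_invariant_prob_def by auto
  obtain \<eta> where ps: "preimage_selector \<eta>" and cD: "card (discont \<eta>) = p"
    and Fdef: "F = closure (\<eta> ` circ)"
    using assms(3) unfolding flower_def by blast
  have P: "P \<in> components (closure (\<eta> ` circ))" using assms(5) Fdef unfolding petals_def by simp
  obtain u v where uv: "u < v" "v < u + 1" "cis2pi u \<in> discont \<eta>" "cis2pi v \<in> discont \<eta>"
    "\<forall>s\<in>{u<..<v}. cis2pi s \<notin> discont \<eta>" "closure (\<eta> ` cis2pi ` {u<..<v}) \<subseteq> P"
    using arc_select[OF ps _ P] cD assms(2) by blast
  define A where "A = cis2pi ` {u<..<v}"
  obtain \<eta>' where ps': "preimage_selector \<eta>'"
    and disc: "discont \<eta>' = discont \<eta> - {cis2pi u, cis2pi v}"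
    and cov: "closure (\<eta> ` circ) \<subseteq> closure (\<eta> ` A) \<union> closure (\<eta>' ` circ)"
    and disj: "\<eta> ` A \<inter> closure (\<eta>' ` circ) = {}"
    using flip_arc[OF ps uv(1-5)] unfolding A_def by blast
  define F' where "F' = closure (\<eta>' ` circ)"
  have ab: "cis2pi u \<noteq> cis2pi v"
  proof
    assume "cis2pi u = cis2pi v"
    then obtain k :: int where "u = v + real_of_int k" unfolding cis2pi_eq_iff by blast
    then have "-1 < real_of_int k" "real_of_int k < 0" using uv by auto
    then show False by (rule no_int_m10)
  qed
  have fD: "finite (discont \<eta>)" using ps unfolding preimage_selector_def by auto
  have "card (discont \<eta>') = p - 2"
    unfolding disc using card_Diff_subset[of "{cis2pi u, cis2pi v}" "discont \<eta>"] uv(3,4) ab cD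
    by simp
  then have fl: "flower (p - 2) F'" unfolding flower_def F'_def using ps' by blast
  have PF: "P \<subseteq> F" using assms(5) unfolding petals_def using in_components_subset by blast
  have Pc: "closed P" using assms(5) closed_components[of F P] unfolding petals_def Fdef by auto
  have CP: "closure (\<eta> ` A) \<subseteq> P" using uv(6) unfolding A_def .
  have nF: "emeasure \<mu> (- F) = 0"
  proof -
    have "- supp \<mu> \<in> null_sets \<mu>" by (rule null_compl_supp[OF sets])
    moreover have "- F \<subseteq> - supp \<mu>" using assms(4) by auto
    ultimately show ?thesis
      using null_sets_subset[of "- supp \<mu>" \<mu> "- F"] sets by (auto simp: borel_open Fdef)
  qed
  have supp: "supp \<mu> \<subseteq> F'"
  proof
    fix x assume x: "x \<in> supp \<mu>"
    show "x \<in> F'"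
    proof (rule ccontr)
      assume "x \<notin> F'"
      moreover have "open (- F')" unfolding F'_def by auto
      ultimately have pos: "emeasure \<mu> (- F') > 0"
        using x unfolding supp_def by blast
      have sub: "- F' \<subseteq> closure (\<eta> ` A) \<union> - F" using cov unfolding Fdef F'_def by auto
      have m1: "closure (\<eta> ` A) \<in> sets \<mu>" using sets by (simp add: borel_closed)
      have m2: "- F \<in> sets \<mu>" using sets by (simp add: borel_open Fdef)
      have mP: "P \<in> sets \<mu>" using sets Pc by (simp add: borel_closed)
      have "emeasure \<mu> (- F') \<le> emeasure \<mu> (closure (\<eta> ` A) \<union> - F)"
        using sub m1 m2 by (intro emeasure_mono) auto
      also have "\<dots> \<le> emeasure \<mu> (closure (\<eta> ` A)) + emeasure \<mu> (- F)"
        using m1 m2 by (rule emeasure_subadditive)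
      also have "emeasure \<mu> (closure (\<eta> ` A)) \<le> emeasure \<mu> P"
        using CP mP by (rule emeasure_mono)
      then have "emeasure \<mu> (closure (\<eta> ` A)) = 0" using assms(6) by simp
      finally show False using pos nF by simp
    qed
  qed
  have notsub: "\<not> P \<subseteq> F'"
  proof
    assume PF': "P \<subseteq> F'"
    have "(u + v) / 2 \<in> {u<..<v}" using uv by auto
    then have "\<eta> (cis2pi ((u + v) / 2)) \<in> \<eta> ` A" unfolding A_def by auto
    moreover have "\<eta> ` A \<subseteq> P" using CP closure_subset by blast
    ultimately show False using PF' disj unfolding F'_def by blast
  qed
  show ?thesis using fl supp notsub by blast
qed

end
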